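(* Let $\nabla$ and $\tilde\nabla$ be Type $\mathcal A$ connections on $\mathbb R^2$ whose Ricci tensors $\rho$ and $\tilde\rho$ are non-degenerate. Then $\nabla$ is linearly equivalent to $\tilde\nabla$ if and only if $\nabla$ is (locally) affinely equivalent to $\tilde\nabla$.
   Context: A torsion-free connection has Christoffel symbols $\nabla_{\partial_{x^i}}\partial_{x^j}=\Gamma_{ij}^k\partial_{x^k}$; curvature $R(X,Y)Z=\nabla_X\nabla_YZ-\nabla_Y\nabla_XZ-\nabla_{[X,Y]}Z$, Ricci tensor $\rho(Y,Z)=\mathrm{Tr}(X\mapsto R(X,Y)Z)$. For real constants, $\Gamma(a,b,c,d,e,f)$ denotes the connection on $\mathbb R^2$ with constant Christoffel symbols $\Gamma_{11}^1=a$, $\Gamma_{11}^2=b$, $\Gamma_{12}^1=\Gamma_{21}^1=c$, $\Gamma_{12}^2=\Gamma_{21}^2=d$, $\Gamma_{22}^1=e$, $\Gamma_{22}^2=f$; these are the Type $\mathcal A$ connections. Two Type $\mathcal A$ connections are linearly equivalent if there is $T\in GL(2,\mathbb R)$ with $T^*\tilde\nabla=\nabla$. They are (locally) affinely equivalent if there exist open sets $U,V\subset\mathbb R^2$ and a diffeomorphism $T:U\to V$ with $T^*\tilde\nabla=\nabla$ on $U$. *)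

theory Defs
  imports "HOL-Analysis.Analysis"
begin

text \<open>Points of R^2 are vectors of type real^2; coordinate indices are the elements 1, 2 of
  the numeral type 2.  A connection with constant Christoffel symbols is given by
  G :: 2 => 2 => real^2, where G i j is the vector nabla_{d_i} d_j, i.e. (G i j) $ k = Gamma_ij^k.\<close>

definition typeA :: "real \<Rightarrow> real \<Rightarrow> real \<Rightarrow> real \<Rightarrow> real \<Rightarrow> real \<Rightarrow> 2 \<Rightarrow> 2 \<Rightarrow> real^2" where
  "typeA a b c d e f i j =
     (if i = 1 \<and> j = 1 then vector [a, b]
      else if i = 2 \<and> j = 2 then vector [e, f]
      else vector [c, d])"

text \<open>nabla_X Y for constant vector fields X = u, Y = v (bilinear extension).\<close>
definition conn_apply :: "(2 \<Rightarrow> 2 \<Rightarrow> real^2) \<Rightarrow> real^2 \<Rightarrow> real^2 \<Rightarrow> real^2" where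
  "conn_apply G u v = (\<Sum>i\<in>UNIV. \<Sum>j\<in>UNIV. (u $ i * v $ j) *\<^sub>R G i j)"

text \<open>Curvature R(d_i,d_j)d_k for constant Christoffel symbols (the bracket term vanishes).\<close>
definition curv :: "(2 \<Rightarrow> 2 \<Rightarrow> real^2) \<Rightarrow> 2 \<Rightarrow> 2 \<Rightarrow> 2 \<Rightarrow> real^2" where
  "curv G i j k = (\<Sum>l\<in>UNIV. (G j k $ l) *\<^sub>R G i l - (G i k $ l) *\<^sub>R G j l)"

definition ricci :: "(2 \<Rightarrow> 2 \<Rightarrow> real^2) \<Rightarrow> 2 \<Rightarrow> 2 \<Rightarrow> real" where
  "ricci G j k = (\<Sum>i\<in>UNIV. curv G i j k $ i)"

definition ricci_nondegenerate :: "(2 \<Rightarrow> 2 \<Rightarrow> real^2) \<Rightarrow> bool" where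
  "ricci_nondegenerate G \<longleftrightarrow> det (\<chi> j k. ricci G j k) \<noteq> 0"

fun iter_deriv :: "(real^2) list \<Rightarrow> (real^2 \<Rightarrow> real^2) \<Rightarrow> real^2 \<Rightarrow> real^2" where
  "iter_deriv [] g = g"
| "iter_deriv (v # vs) g = (\<lambda>x. frechet_derivative (iter_deriv vs g) (at x) v)"

definition smooth_on :: "(real^2) set \<Rightarrow> (real^2 \<Rightarrow> real^2) \<Rightarrow> bool" where
  "smooth_on U g \<longleftrightarrow> (\<forall>vs. iter_deriv vs g differentiable_on U)"

definition diffeo :: "(real^2) set \<Rightarrow> (real^2) set \<Rightarrow> (real^2 \<Rightarrow> real^2) \<Rightarrow> bool" where
  "diffeo U V T \<longleftrightarrow> open U \<and> open V \<and> bij_betw T U V \<and> smooth_on U T \<and> smooth_on V (inv_into U T)"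

text \<open>T^* nabla~ = nabla on U:  dT(nabla_X Y) = nabla~_{dT X} (dT Y) for all constant X = u, Y = v.\<close>
definition pullback_eq_on :: "(real^2) set \<Rightarrow> (real^2 \<Rightarrow> real^2) \<Rightarrow> (2 \<Rightarrow> 2 \<Rightarrow> real^2) \<Rightarrow> (2 \<Rightarrow> 2 \<Rightarrow> real^2) \<Rightarrow> bool" where
  "pullback_eq_on U T Gt G \<longleftrightarrow>
     (\<forall>x\<in>U. \<forall>u v.
        frechet_derivative T (at x) (conn_apply G u v)
        = frechet_derivative (\<lambda>y. frechet_derivative T (at y) v) (at x) u
          + conn_apply Gt (frechet_derivative T (at x) u) (frechet_derivative T (at x) v))"

definition linearly_equivalent :: "(2 \<Rightarrow> 2 \<Rightarrow> real^2) \<Rightarrow> (2 \<Rightarrow> 2 \<Rightarrow> real^2) \<Rightarrow> bool" where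
  "linearly_equivalent G Gt \<longleftrightarrow>
     (\<exists>A :: real^2^2. invertible A \<and> pullback_eq_on UNIV (\<lambda>x. A *v x) Gt G)"

definition affinely_equivalent :: "(2 \<Rightarrow> 2 \<Rightarrow> real^2) \<Rightarrow> (2 \<Rightarrow> 2 \<Rightarrow> real^2) \<Rightarrow> bool" where
  "affinely_equivalent G Gt \<longleftrightarrow>
     (\<exists>U V T. U \<noteq> {} \<and> diffeo U V T \<and> pullback_eq_on U T Gt G)"

end

theory Submission
  imports Defs
begin


lemma schwarz_aux:
  fixes f :: "'a::real_normed_vector \<Rightarrow> 'b::real_normed_vector"
  assumes U: "open U" "x \<in> U"
   and d1: "\<And>y. y \<in> U \<Longrightarrow> (f has_derivative f' y) (at y)"
   and d2: "((\<lambda>y. f' y w) has_derivative (\<lambda>z. F z w)) (at x)"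
  shows "((\<lambda>t. (f (x + t *\<^sub>R w + t *\<^sub>R u) - f (x + t *\<^sub>R w) - f (x + t *\<^sub>R u) + f x) /\<^sub>R t^2) \<longlongrightarrow> F u w) (at_right 0)"
proof (rule tendstoI)
  fix \<epsilon> :: real assume ep: "\<epsilon> > 0"
  define M where "M = 2 * norm w + norm u + 1"
  have M: "M > 0" unfolding M_def by (simp add: add_nonneg_pos)
  define e where "e = \<epsilon> / (2 * M)"
  have e: "e > 0" unfolding e_def using ep M by simp
  have bl2: "bounded_linear (\<lambda>z. F z w)" using d2 by (rule has_derivative_bounded_linear)
  from d2[unfolded has_derivative_at_alt] e obtain d1 where d1p: "d1 > 0"
    and d1b: "\<And>y. norm (y - x) < d1 \<Longrightarrow> norm (f' y w - f' x w - F (y - x) w) \<le> e * norm (y - x)"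
    by blast
  from U obtain d2 where d2p: "d2 > 0" and d2b: "ball x d2 \<subseteq> U"
    using open_contains_ball by blast
  define b where "b = min d1 d2 / M"
  have bp: "b > 0" unfolding b_def using d1p d2p M by simp
  show "eventually (\<lambda>t. dist ((f (x + t *\<^sub>R w + t *\<^sub>R u) - f (x + t *\<^sub>R w) - f (x + t *\<^sub>R u) + f x) /\<^sub>R t^2) (F u w) < \<epsilon>) (at_right 0)"
    unfolding eventually_at_right_field
  proof (intro exI[of _ b] conjI allI impI)
    show "0 < b" by fact
    fix t :: real assume t0: "0 < t" and tb: "t < b"
    have tM: "t * M < min d1 d2" using tb M unfolding b_def by (simp add: pos_less_divide_eq)
    define \<psi> where "\<psi> s = f (x + s *\<^sub>R w + t *\<^sub>R u) - f (x + s *\<^sub>R w) - (s * t) *\<^sub>R F u w" for s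
    define \<psi>' where "\<psi>' s = (\<lambda>h. f' (x + s *\<^sub>R w + t *\<^sub>R u) (h *\<^sub>R w) - f' (x + s *\<^sub>R w) (h *\<^sub>R w) - (h * t) *\<^sub>R F u w)" for s
    have nrm1: "norm (s *\<^sub>R w + t *\<^sub>R u) \<le> t * M" and nrm2: "norm (s *\<^sub>R w) \<le> t * M"
      and nrm3: "norm (s *\<^sub>R w + t *\<^sub>R u) + norm (s *\<^sub>R w) \<le> t * M"
      if "s \<in> {0..t}" for s
    proof -
      have "norm (s *\<^sub>R w + t *\<^sub>R u) \<le> norm (s *\<^sub>R w) + norm (t *\<^sub>R u)" by (rule norm_triangle_ineq)
      also have "norm (s *\<^sub>R w) = s * norm w" using that by simp
      also have "norm (t *\<^sub>R u) = t * norm u" using t0 by simp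
      finally have A: "norm (s *\<^sub>R w + t *\<^sub>R u) \<le> s * norm w + t * norm u" .
      have B: "s * norm w \<le> t * norm w" using that by (simp add: mult_right_mono)
      have C: "norm (s *\<^sub>R w) = s * norm w" using that by simp
      have D: "t * M = 2 * (t * norm w) + t * norm u + t" unfolding M_def by (simp add: algebra_simps)
      have E: "t * norm w \<ge> 0" "t * norm u \<ge> 0" using t0 by auto
      show "norm (s *\<^sub>R w + t *\<^sub>R u) \<le> t * M" using A B D t0 E by linarith
      show "norm (s *\<^sub>R w) \<le> t * M" using B C D t0 E by linarith
      show "norm (s *\<^sub>R w + t *\<^sub>R u) + norm (s *\<^sub>R w) \<le> t * M" using A B C D t0 E by linarith
    qed
    have inU1: "x + s *\<^sub>R w + t *\<^sub>R u \<in> U" and inU2: "x + s *\<^sub>R w \<in> U" if "s \<in> {0..t}" for s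
    proof -
      have "dist x (x + s *\<^sub>R w + t *\<^sub>R u) < d2" using nrm1[OF that] tM by (simp add: dist_norm add.assoc norm_minus_commute add.commute)
      then show "x + s *\<^sub>R w + t *\<^sub>R u \<in> U" using d2b by auto
      have "dist x (x + s *\<^sub>R w) < d2" using nrm2[OF that] tM by (simp add: dist_norm norm_minus_commute)
      then show "x + s *\<^sub>R w \<in> U" using d2b by auto
    qed
    have deriv: "(\<psi> has_derivative \<psi>' s) (at s within {0..t})" if "s \<in> {0..t}" for s
    proof -
      have a1: "((\<lambda>s. x + s *\<^sub>R w + t *\<^sub>R u) has_derivative (\<lambda>h. h *\<^sub>R w)) (at s within {0..t})"
        by (auto intro!: derivative_eq_intros)
      have a2: "((\<lambda>s. x + s *\<^sub>R w) has_derivative (\<lambda>h. h *\<^sub>R w)) (at s within {0..t})"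
        by (auto intro!: derivative_eq_intros)
      note c1 = has_derivative_compose[OF a1 d1[OF inU1[OF that]]]
      note c2 = has_derivative_compose[OF a2 d1[OF inU2[OF that]]]
      have a3: "((\<lambda>s. (s * t) *\<^sub>R F u w) has_derivative (\<lambda>h. (h * t) *\<^sub>R F u w)) (at s within {0..t})"
        by (auto intro!: derivative_eq_intros)
      show ?thesis unfolding \<psi>_def \<psi>'_def
        by (intro has_derivative_diff c1 c2 a3)
    qed
    have bound: "onorm (\<psi>' s) \<le> e * (t * M)" if "s \<in> {0..t}" for s
    proof (rule onorm_le)
      fix h :: real
      have l1: "linear (f' (x + s *\<^sub>R w + t *\<^sub>R u))" using d1[OF inU1[OF that]] has_derivative_linear by blast
      have l2: "linear (f' (x + s *\<^sub>R w))" using d1[OF inU2[OF that]] has_derivative_linear by blast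
      have eq: "\<psi>' s h = h *\<^sub>R ((f' (x + s *\<^sub>R w + t *\<^sub>R u) w - f' x w - F (s *\<^sub>R w + t *\<^sub>R u) w)
            - (f' (x + s *\<^sub>R w) w - f' x w - F (s *\<^sub>R w) w))"
        unfolding \<psi>'_def linear_scale[OF l1] linear_scale[OF l2]
        using linear_add[OF bounded_linear.linear[OF bl2], of "s *\<^sub>R w" "t *\<^sub>R u"] linear_scale[OF bounded_linear.linear[OF bl2], of t u]
        by (simp add: algebra_simps)
      have n1: "norm (f' (x + s *\<^sub>R w + t *\<^sub>R u) w - f' x w - F (s *\<^sub>R w + t *\<^sub>R u) w) \<le> e * norm (s *\<^sub>R w + t *\<^sub>R u)"
        using d1b[of "x + s *\<^sub>R w + t *\<^sub>R u"] nrm1[OF that] tM by (simp add: add.assoc)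
      have n2: "norm (f' (x + s *\<^sub>R w) w - f' x w - F (s *\<^sub>R w) w) \<le> e * norm (s *\<^sub>R w)"
        using d1b[of "x + s *\<^sub>R w"] nrm2[OF that] tM by simp
      have "norm ((f' (x + s *\<^sub>R w + t *\<^sub>R u) w - f' x w - F (s *\<^sub>R w + t *\<^sub>R u) w)
            - (f' (x + s *\<^sub>R w) w - f' x w - F (s *\<^sub>R w) w)) \<le> e * norm (s *\<^sub>R w + t *\<^sub>R u) + e * norm (s *\<^sub>R w)"
        by (rule order_trans[OF norm_triangle_ineq4 add_mono[OF n1 n2]])
      also have "\<dots> = e * (norm (s *\<^sub>R w + t *\<^sub>R u) + norm (s *\<^sub>R w))" by (simp add: distrib_left)
      also have "\<dots> \<le> e * (t * M)" using mult_left_mono[OF nrm3[OF that] less_imp_le[OF e]] .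
      finally have X: "norm ((f' (x + s *\<^sub>R w + t *\<^sub>R u) w - f' x w - F (s *\<^sub>R w + t *\<^sub>R u) w)
            - (f' (x + s *\<^sub>R w) w - f' x w - F (s *\<^sub>R w) w)) \<le> e * (t * M)" .
      show "norm (\<psi>' s h) \<le> e * (t * M) * norm h"
        unfolding eq norm_scaleR real_norm_def using mult_left_mono[OF X abs_ge_zero[of h]] by (simp add: mult.commute)
    qed
    have "norm (\<psi> t - \<psi> 0) \<le> e * (t * M) * norm (t - 0)"
      by (rule differentiable_bound[of "{0..t}" \<psi> \<psi>']) (use deriv bound t0 in auto)
    moreover have "\<psi> t - \<psi> 0 = (f (x + t *\<^sub>R w + t *\<^sub>R u) - f (x + t *\<^sub>R w) - f (x + t *\<^sub>R u) + f x) - t^2 *\<^sub>R F u w"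
      unfolding \<psi>_def by (simp add: power2_eq_square algebra_simps)
    ultimately have nb: "norm ((f (x + t *\<^sub>R w + t *\<^sub>R u) - f (x + t *\<^sub>R w) - f (x + t *\<^sub>R u) + f x) - t^2 *\<^sub>R F u w) \<le> e * M * t^2"
      using t0 by (simp add: power2_eq_square mult.assoc mult.left_commute)
    have "dist ((f (x + t *\<^sub>R w + t *\<^sub>R u) - f (x + t *\<^sub>R w) - f (x + t *\<^sub>R u) + f x) /\<^sub>R t^2) (F u w)
        = norm ((f (x + t *\<^sub>R w + t *\<^sub>R u) - f (x + t *\<^sub>R w) - f (x + t *\<^sub>R u) + f x) - t^2 *\<^sub>R F u w) / t^2"
    proof -
      have "(f (x + t *\<^sub>R w + t *\<^sub>R u) - f (x + t *\<^sub>R w) - f (x + t *\<^sub>R u) + f x) /\<^sub>R t^2 - F u w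
          = (1 / t^2) *\<^sub>R ((f (x + t *\<^sub>R w + t *\<^sub>R u) - f (x + t *\<^sub>R w) - f (x + t *\<^sub>R u) + f x) - t^2 *\<^sub>R F u w)"
        using t0 by (simp add: scaleR_diff_right inverse_eq_divide)
      then show ?thesis using t0 by (simp add: dist_norm)
    qed
    also have "\<dots> \<le> e * M" using nb t0 by (simp add: divide_le_eq)
    also have "e * M = \<epsilon> / 2" unfolding e_def using M by simp
    also have "\<dots> < \<epsilon>" using ep by simp
    finally show "dist ((f (x + t *\<^sub>R w + t *\<^sub>R u) - f (x + t *\<^sub>R w) - f (x + t *\<^sub>R u) + f x) /\<^sub>R t^2) (F u w) < \<epsilon>" .
  qed
qed

lemma schwarz:
  fixes f :: "'a::real_normed_vector \<Rightarrow> 'b::real_normed_vector"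
  assumes U: "open U" "x \<in> U"
   and d1: "\<And>y. y \<in> U \<Longrightarrow> (f has_derivative f' y) (at y)"
   and d2: "\<And>v. ((\<lambda>y. f' y v) has_derivative (\<lambda>z. F z v)) (at x)"
  shows "F u w = F w u"
proof -
  have A: "((\<lambda>t. (f (x + t *\<^sub>R w + t *\<^sub>R u) - f (x + t *\<^sub>R w) - f (x + t *\<^sub>R u) + f x) /\<^sub>R t^2) \<longlongrightarrow> F u w) (at_right 0)"
    by (rule schwarz_aux[OF U d1 d2])
  have B: "((\<lambda>t. (f (x + t *\<^sub>R u + t *\<^sub>R w) - f (x + t *\<^sub>R u) - f (x + t *\<^sub>R w) + f x) /\<^sub>R t^2) \<longlongrightarrow> F w u) (at_right 0)"
    by (rule schwarz_aux[OF U d1 d2])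
  have "(\<lambda>t. (f (x + t *\<^sub>R u + t *\<^sub>R w) - f (x + t *\<^sub>R u) - f (x + t *\<^sub>R w) + f x) /\<^sub>R t^2)
      = (\<lambda>t. (f (x + t *\<^sub>R w + t *\<^sub>R u) - f (x + t *\<^sub>R w) - f (x + t *\<^sub>R u) + f x) /\<^sub>R t^2)"
    by (simp add: add.assoc add.commute add.left_commute diff_add_eq algebra_simps)
  with B have B': "((\<lambda>t. (f (x + t *\<^sub>R w + t *\<^sub>R u) - f (x + t *\<^sub>R w) - f (x + t *\<^sub>R u) + f x) /\<^sub>R t^2) \<longlongrightarrow> F w u) (at_right 0)"
    by simp
  show ?thesis using tendsto_unique[OF trivial_limit_at_right_real A B'] .
qed



lemma conn_typeA:
  "conn_apply (typeA a b c d e f) u v =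
    vector [a*u$1* v$1 + c*(u$1* v$2 + u$2* v$1) + e*u$2* v$2,
            b*u$1* v$1 + d*(u$1* v$2 + u$2* v$1) + f*u$2* v$2]"
  unfolding conn_apply_def typeA_def
  by (simp add: sum_2 vec_eq_iff forall_2 algebra_simps)

lemma ricci_typeA:
  "ricci (typeA a b c d e f) 1 1 = a*d + b*f - b*c - d*d"
  "ricci (typeA a b c d e f) 1 2 = c*d - b*e"
  "ricci (typeA a b c d e f) 2 1 = c*d - b*e"
  "ricci (typeA a b c d e f) 2 2 = a*e + c*f - c*c - d*e"
  unfolding ricci_def curv_def typeA_def
  by (simp_all add: sum_2 algebra_simps)

definition rho :: "(2\<Rightarrow>2\<Rightarrow>real^2) \<Rightarrow> real^2 \<Rightarrow> real^2 \<Rightarrow> real" where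
  "rho G u v = (\<Sum>j\<in>UNIV. \<Sum>k\<in>UNIV. u$j * v$k * ricci G j k)"

definition Rm :: "(2\<Rightarrow>2\<Rightarrow>real^2) \<Rightarrow> real^2 \<Rightarrow> real^2 \<Rightarrow> real^2 \<Rightarrow> real^2" where
  "Rm G w u v = conn_apply G w (conn_apply G u v) - conn_apply G u (conn_apply G w v)"

lemma Rm_2D: "Rm (typeA a b c d e f) w u v = rho (typeA a b c d e f) u v *\<^sub>R w - rho (typeA a b c d e f) w v *\<^sub>R u"
  unfolding Rm_def rho_def conn_typeA
  by (simp add: sum_2 vec_eq_iff forall_2 ricci_typeA algebra_simps)


lemma conn_sym: "conn_apply (typeA a b c d e f) u v = conn_apply (typeA a b c d e f) v u"
  unfolding conn_typeA by (simp add: algebra_simps)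

lemma conn_diff_l: "conn_apply (typeA a b c d e f) (x - y) z = conn_apply (typeA a b c d e f) x z - conn_apply (typeA a b c d e f) y z"
  unfolding conn_typeA by (simp add: vec_eq_iff forall_2 algebra_simps)

lemma conn_diff_r: "conn_apply (typeA a b c d e f) z (x - y) = conn_apply (typeA a b c d e f) z x - conn_apply (typeA a b c d e f) z y"
  unfolding conn_typeA by (simp add: vec_eq_iff forall_2 algebra_simps)

lemma conn_bilinear: "bilinear (conn_apply (typeA a b c d e f))"
  unfolding bilinear_def linear_iff conn_typeA
  by (simp add: vec_eq_iff forall_2 algebra_simps)

lemma conn_bb: "bounded_bilinear (conn_apply (typeA a b c d e f))"
  using conn_bilinear bilinear_conv_bounded_bilinear by blast

lemma rho_sym: "rho (typeA a b c d e f) u v = rho (typeA a b c d e f) v u"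
  unfolding rho_def by (simp add: sum_2 ricci_typeA algebra_simps)

lemma rho_bilinear: "bilinear (rho G)"
  unfolding bilinear_def linear_iff rho_def
  by (simp add: sum_2 algebra_simps)

lemma rho_bb: "bounded_bilinear (rho G)"
  using rho_bilinear bilinear_conv_bounded_bilinear by blast

lemma rho_nondeg:
  assumes "ricci_nondegenerate G" and "\<And>p. rho G z p = 0"
  shows "z = 0"
proof -
  have d: "ricci G 1 1 * ricci G 2 2 - ricci G 1 2 * ricci G 2 1 \<noteq> 0"
    using assms(1) unfolding ricci_nondegenerate_def by (simp add: det_2)
  have e1: "z$1 * ricci G 1 1 + z$2 * ricci G 2 1 = 0"
    using assms(2)[of "axis 1 1"] unfolding rho_def by (simp add: sum_2 axis_def)
  have e2: "z$1 * ricci G 1 2 + z$2 * ricci G 2 2 = 0"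
    using assms(2)[of "axis 2 1"] unfolding rho_def by (simp add: sum_2 axis_def)
  have "z$1 * (ricci G 1 1 * ricci G 2 2 - ricci G 1 2 * ricci G 2 1) = 0"
    using e1 e2 by algebra
  hence z1: "z$1 = 0" using d by simp
  have "z$2 * (ricci G 1 1 * ricci G 2 2 - ricci G 1 2 * ricci G 2 1) = 0"
    using e1 e2 by algebra
  hence z2: "z$2 = 0" using d by simp
  show ?thesis using z1 z2 by (simp add: vec_eq_iff forall_2)
qed

lemma fd_mat: fixes B :: "real^2^2" shows "frechet_derivative (\<lambda>x. B *v x) (at y) = (\<lambda>x. B *v x)"
  using frechet_derivative_at[OF bounded_linear_imp_has_derivative[OF matrix_vector_mul_bounded_linear[of B]]]
  by simp

lemma iter_deriv_mat: fixes B :: "real^2^2" shows "\<exists>c. iter_deriv vs (\<lambda>x. B *v x) = (\<lambda>x. B *v x) \<or> iter_deriv vs (\<lambda>x. B *v x) = (\<lambda>x. c)"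
proof (induction vs)
  case Nil
  then show ?case by simp
next
  case (Cons v vs)
  then obtain c where "iter_deriv vs (\<lambda>x. B *v x) = (\<lambda>x. B *v x) \<or> iter_deriv vs (\<lambda>x. B *v x) = (\<lambda>x. c)" by blast
  then show ?case
  proof
    assume h: "iter_deriv vs (\<lambda>x. B *v x) = (\<lambda>x. B *v x)"
    show ?case by (rule exI[of _ "B *v v"]) (simp add: h fd_mat)
  next
    assume h: "iter_deriv vs (\<lambda>x. B *v x) = (\<lambda>x. c)"
    show ?case by (rule exI[of _ 0]) (simp add: h)
  qed
qed

lemma smooth_mat: fixes B :: "real^2^2" shows "smooth_on S (\<lambda>x. B *v x)"
  unfolding smooth_on_def
proof
  fix vs
  obtain c where "iter_deriv vs (\<lambda>x. B *v x) = (\<lambda>x. B *v x) \<or> iter_deriv vs (\<lambda>x. B *v x) = (\<lambda>x. c)"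
    using iter_deriv_mat by blast
  then show "iter_deriv vs (\<lambda>x. B *v x) differentiable_on S"
  proof
    assume h: "iter_deriv vs (\<lambda>x. B *v x) = (\<lambda>x. B *v x)"
    show ?thesis unfolding h
      using bounded_linear_imp_differentiable_on[OF matrix_vector_mul_bounded_linear] .
  qed simp
qed

lemma forward:
  assumes inv: "invertible A" and pb: "pullback_eq_on UNIV (\<lambda>x. A *v x) Gt G"
  shows "affinely_equivalent G Gt"
proof -
  obtain B where BA: "B ** A = mat 1" using inv invertible_left_inverse by blast
  hence AB: "A ** B = mat 1" using matrix_left_right_inverse by blast
  have inj: "inj (\<lambda>x. A *v x)"
    by (metis BA matrix_vector_mul_assoc matrix_vector_mul_lid injI)
  have surj: "surj (\<lambda>x. A *v x)"
    by (metis AB matrix_vector_mul_assoc matrix_vector_mul_lid surjI)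
  have bij: "bij_betw (\<lambda>x. A *v x) UNIV UNIV" using inj surj by (simp add: bij_betw_def)
  have invf: "inv_into UNIV (\<lambda>x. A *v x) = (\<lambda>x. B *v x)"
  proof
    fix y
    show "inv_into UNIV (\<lambda>x. A *v x) y = B *v y"
      by (rule inv_into_f_eq[OF inj]) (auto simp: matrix_vector_mul_assoc AB)
  qed
  have "diffeo UNIV UNIV (\<lambda>x. A *v x)"
    unfolding diffeo_def invf using bij smooth_mat by simp
  then show ?thesis unfolding affinely_equivalent_def using pb by blast
qed



lemma reverse:
  fixes a b c d e f a' b' c' d' e' f' :: real
  defines "G \<equiv> typeA a b c d e f" and "Gt \<equiv> typeA a' b' c' d' e' f'"
  assumes nd: "ricci_nondegenerate Gt"
    and U0: "U \<noteq> {}" and dif: "diffeo U V T" and pb: "pullback_eq_on U T Gt G"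
  shows "linearly_equivalent G Gt"
proof -
  obtain x0 where x0: "x0 \<in> U" using U0 by blast
  have oU: "open U" and oV: "open V" and bij: "bij_betw T U V"
    and sT: "smooth_on U T" and sS: "smooth_on V (inv_into U T)"
    using dif unfolding diffeo_def by auto
  define S where "S = inv_into U T"
  define L where "L y = frechet_derivative T (at y)" for y
  have dT: "(T has_derivative L y) (at y)" if "y \<in> U" for y
  proof -
    have "T differentiable_on U" using sT unfolding smooth_on_def by (metis iter_deriv.simps(1))
    hence "T differentiable at y" using differentiable_on_eq_differentiable_at[OF oU] that by blast
    thus ?thesis unfolding L_def using frechet_derivative_works by blast
  qed
  have linL: "linear (L y)" if "y \<in> U" for y
    using dT[OF that] has_derivative_linear by blast
  have injL: "inj (L y)" if yU: "y \<in> U" for y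
  proof -
    have TyV: "T y \<in> V" using bij yU bij_betwE by blast
    have "S differentiable_on V" using sS unfolding smooth_on_def S_def by (metis iter_deriv.simps(1))
    hence "S differentiable at (T y)" using differentiable_on_eq_differentiable_at[OF oV] TyV by blast
    then obtain DS where dS: "(S has_derivative DS) (at (T y))" unfolding differentiable_def by blast
    have c: "((\<lambda>z. S (T z)) has_derivative (\<lambda>h. DS (L y h))) (at y)"
      using has_derivative_compose[OF dT[OF yU] dS] .
    have "((\<lambda>z. z) has_derivative (\<lambda>h. DS (L y h))) (at y)"
      by (rule has_derivative_transform_within_open[OF c oU yU])
        (simp add: S_def bij_betw_inv_into_left[OF bij])
    hence "(\<lambda>h. DS (L y h)) = (\<lambda>h. h)" using has_derivative_unique has_derivative_ident by blast
    hence "\<And>h. DS (L y h) = h" by metis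
    thus ?thesis by (metis injI)
  qed
  have surjL: "surj (L y)" if "y \<in> U" for y
    using linear_injective_imp_surjective[OF linL[OF that] injL[OF that]] by simp
  define \<Phi> where "\<Phi> y u v = L y (conn_apply G u v) - conn_apply Gt (L y u) (L y v)" for y u v
  have d2: "((\<lambda>z. L z v) has_derivative (\<lambda>u. \<Phi> y u v)) (at y)" if yU: "y \<in> U" for y v
  proof -
    have "iter_deriv [v] T differentiable_on U" using sT unfolding smooth_on_def by blast
    hence "(\<lambda>z. L z v) differentiable_on U" by (simp add: L_def)
    hence "(\<lambda>z. L z v) differentiable at y" using differentiable_on_eq_differentiable_at[OF oU] yU by blast
    hence h: "((\<lambda>z. L z v) has_derivative frechet_derivative (\<lambda>z. L z v) (at y)) (at y)"
      using frechet_derivative_works by blast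
    have "frechet_derivative (\<lambda>z. L z v) (at y) = (\<lambda>u. \<Phi> y u v)"
    proof
      fix u
      show "frechet_derivative (\<lambda>z. L z v) (at y) u = \<Phi> y u v"
        using pb yU unfolding pullback_eq_on_def \<Phi>_def L_def by (metis add_diff_cancel_right')
    qed
    thus ?thesis using h by simp
  qed
  define \<Phi>3 where "\<Phi>3 y w u v = \<Phi> y w (conn_apply G u v) - conn_apply Gt (\<Phi> y w u) (L y v) - conn_apply Gt (L y u) (\<Phi> y w v)" for y w u v
  have d3: "((\<lambda>z. \<Phi> z u v) has_derivative (\<lambda>w. \<Phi>3 y w u v)) (at y)" if yU: "y \<in> U" for y u v
  proof -
    have bb: "((\<lambda>z. conn_apply Gt (L z u) (L z v)) has_derivative
        (\<lambda>w. conn_apply Gt (L y u) (\<Phi> y w v) + conn_apply Gt (\<Phi> y w u) (L y v))) (at y)"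
      using bounded_bilinear.FDERIV[OF conn_bb d2[OF yU] d2[OF yU]] unfolding Gt_def .
    have "((\<lambda>z. \<Phi> z u v) has_derivative
        (\<lambda>w. \<Phi> y w (conn_apply G u v) - (conn_apply Gt (L y u) (\<Phi> y w v) + conn_apply Gt (\<Phi> y w u) (L y v)))) (at y)"
      unfolding \<Phi>_def[of _ u v] by (rule has_derivative_diff[OF d2[OF yU] bb])
    thus ?thesis by (rule has_derivative_eq_rhs) (auto simp: \<Phi>3_def)
  qed
  have sym3: "\<Phi>3 y w u v = \<Phi>3 y u w v" if yU: "y \<in> U" for y w u v
    using schwarz[where f="\<lambda>z. L z v" and f'="\<lambda>z u. \<Phi> z u v" and F="\<lambda>w u. \<Phi>3 y w u v", OF oU yU d2 d3[OF yU]]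
    by simp
  have curv: "L y (Rm G w u v) = Rm Gt (L y w) (L y u) (L y v)" if yU: "y \<in> U" for y w u v
    using sym3[OF yU, of w u v] unfolding \<Phi>3_def \<Phi>_def Rm_def G_def Gt_def
    by (simp add: linear_diff[OF linL[OF yU]] conn_diff_l conn_diff_r conn_sym[of a' b' c' d' e' f'] conn_sym[of a b c d e f] algebra_simps)
  have alpha: "(rho G u v - rho Gt (L y u) (L y v)) *\<^sub>R w = (rho G w v - rho Gt (L y w) (L y v)) *\<^sub>R u"
    if yU: "y \<in> U" for y w u v
  proof -
    have id: "L y (rho G u v *\<^sub>R w - rho G w v *\<^sub>R u) = rho Gt (L y u) (L y v) *\<^sub>R L y w - rho Gt (L y w) (L y v) *\<^sub>R L y u"
      using curv[OF yU, of w u v] unfolding G_def Gt_def Rm_2D .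
    have "L y ((rho G u v - rho Gt (L y u) (L y v)) *\<^sub>R w - (rho G w v - rho Gt (L y w) (L y v)) *\<^sub>R u) = 0"
      using id by (simp add: linear_diff[OF linL[OF yU]] linear_add[OF linL[OF yU]] linear_scale[OF linL[OF yU]] algebra_simps)
    hence "(rho G u v - rho Gt (L y u) (L y v)) *\<^sub>R w - (rho G w v - rho Gt (L y w) (L y v)) *\<^sub>R u = 0"
      using injL[OF yU] linear_injective_0[OF linL[OF yU]] by blast
    thus ?thesis by simp
  qed
  have ric: "rho Gt (L y u) (L y v) = rho G u v" if yU: "y \<in> U" for y u v
  proof -
    define \<alpha> where "\<alpha> p p' = rho G p p' - rho Gt (L y p) (L y p')" for p p'
    have A: "\<alpha> u' v *\<^sub>R w' = \<alpha> w' v *\<^sub>R u'" for u' w' using alpha[OF yU] unfolding \<alpha>_def by blast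
    have "\<alpha> (axis 2 1) v = 0" using A[of "axis 2 1" "axis 1 1"]
      by (simp add: vec_eq_iff forall_2 axis_def)
    moreover have "\<alpha> (axis 1 1) v = 0" using A[of "axis 2 1" "axis 1 1"]
      by (simp add: vec_eq_iff forall_2 axis_def)
    ultimately have "\<alpha> u v = 0" using A[of u "axis 1 1"]
      by (simp add: vec_eq_iff forall_2 axis_def)
    thus ?thesis unfolding \<alpha>_def by simp
  qed
  have dric: "rho Gt (L x0 u) (\<Phi> x0 w v) + rho Gt (\<Phi> x0 w u) (L x0 v) = 0" for w u v
  proof -
    have h1: "((\<lambda>z. rho Gt (L z u) (L z v)) has_derivative (\<lambda>w. rho Gt (L x0 u) (\<Phi> x0 w v) + rho Gt (\<Phi> x0 w u) (L x0 v))) (at x0)"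
      using bounded_bilinear.FDERIV[OF rho_bb d2[OF x0] d2[OF x0]] .
    have h2: "((\<lambda>z. rho Gt (L z u) (L z v)) has_derivative (\<lambda>w. 0)) (at x0)"
      by (rule has_derivative_transform_within_open[OF has_derivative_const[of "rho G u v"] oU x0])
        (simp add: ric)
    have "(\<lambda>w. rho Gt (L x0 u) (\<Phi> x0 w v) + rho Gt (\<Phi> x0 w u) (L x0 v)) = (\<lambda>w. 0)"
      using has_derivative_unique[OF h1 h2] .
    thus ?thesis by metis
  qed
  define C where "C w u v = rho Gt (\<Phi> x0 w u) (L x0 v)" for w u v
  have Cs: "C w u v = C u w v" for w u v
    unfolding C_def \<Phi>_def G_def by (simp add: conn_sym[of a b c d e f] conn_sym[of a' b' c' d' e' f', folded Gt_def])
  have Ca: "C w u v = - C w v u" for w u v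
    using dric[of u w v] unfolding C_def Gt_def by (simp add: rho_sym[of a' b' c' d' e' f' "L x0 u"] algebra_simps)
  have C0: "C w u v = 0" for w u v
  proof -
    have "C w u v = - C w v u" by (rule Ca)
    also have "\<dots> = - C v w u" by (simp add: Cs)
    also have "\<dots> = C v u w" by (simp add: Ca[of v w u])
    also have "\<dots> = C u v w" by (simp add: Cs)
    also have "\<dots> = - C u w v" by (simp add: Ca[of u v w])
    also have "\<dots> = - C w u v" by (simp add: Cs)
    finally show ?thesis by simp
  qed
  have Phi0: "\<Phi> x0 w u = 0" for w u
  proof (rule rho_nondeg[OF nd])
    fix p
    obtain q where "p = L x0 q" using surjL[OF x0] by (metis surjD)
    thus "rho Gt (\<Phi> x0 w u) p = 0" using C0[of w u q] unfolding C_def by simp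
  qed
  define A where "A = matrix (L x0)"
  have AL: "(\<lambda>h. A *v h) = L x0"
  proof
    fix h show "A *v h = L x0 h" unfolding A_def
      by (rule matrix_works[OF linear_matrix_vector_mul_eq[THEN iffD2, OF linL[OF x0]]])
  qed
  have invA: "invertible A"
    unfolding invertible_left_inverse matrix_left_invertible_injective AL using injL[OF x0] .
  have "pullback_eq_on UNIV (\<lambda>x. A *v x) Gt G"
    unfolding pullback_eq_on_def fd_mat frechet_derivative_const
    using Phi0 unfolding \<Phi>_def by (simp add: AL)
  thus ?thesis unfolding linearly_equivalent_def using invA by blast
qed


theorem theorem3p8:
  fixes a b c d e f a' b' c' d' e' f' :: real
  assumes "ricci_nondegenerate (typeA a b c d e f)"
      and "ricci_nondegenerate (typeA a' b' c' d' e' f')"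
  shows "linearly_equivalent (typeA a b c d e f) (typeA a' b' c' d' e' f')
     \<longleftrightarrow> affinely_equivalent (typeA a b c d e f) (typeA a' b' c' d' e' f')"
proof
  assume "linearly_equivalent (typeA a b c d e f) (typeA a' b' c' d' e' f')"
  then obtain A where "invertible A" "pullback_eq_on UNIV (\<lambda>x. A *v x) (typeA a' b' c' d' e' f') (typeA a b c d e f)"
    unfolding linearly_equivalent_def by blast
  then show "affinely_equivalent (typeA a b c d e f) (typeA a' b' c' d' e' f')" by (rule forward)
next
  assume "affinely_equivalent (typeA a b c d e f) (typeA a' b' c' d' e' f')"
  then obtain U V T where "U \<noteq> {}" "diffeo U V T" "pullback_eq_on U T (typeA a' b' c' d' e' f') (typeA a b c d e f)"
    unfolding affinely_equivalent_def by blast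
  then show "linearly_equivalent (typeA a b c d e f) (typeA a' b' c' d' e' f')"
    using reverse[OF assms(2)] by blast
qed

end
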